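(* Let $d$ and $\alpha$ be positive integers. There is a constant $C$ depending only on $d$ and $\alpha$ such that: if $P(x)$ is a monic polynomial of degree $d$ with real coefficients and $x_0<x_1<\cdots<x_d$ are integers with $|P(x_i)|\leqslant\alpha$ for every $i\in\{0,\dots,d\}$, then $|x_d-x_0|\leqslant C$. *)

theory Defs
  imports "HOL-Computational_Algebra.Polynomial"
begin

end

theory Submission
  imports Defs
begin

lemma lagrange_coeff:
  fixes S :: "real set" and P :: "real poly"
  assumes fin: "finite S" and deg: "degree P < card S"
  shows "coeff P (card S - 1) = (\<Sum>a\<in>S. poly P a / (\<Prod>b\<in>S-{a}. (a - b)))"
proof -
  define c where "c a = poly P a / (\<Prod>b\<in>S-{a}. (a - b))" for a
  define q where "q a = (\<Prod>b\<in>S-{a}. [:-b, 1:])" for a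
  define L where "L = (\<Sum>a\<in>S. smult (c a) (q a))"
  have degq: "degree (q a) = card S - 1" if "a \<in> S" for a
    unfolding q_def using fin that
    by (subst degree_prod_eq_sum_degree) auto
  have lcq: "lead_coeff (q a) = 1" for a
    unfolding q_def lead_coeff_prod by simp
  have polyq: "poly (q a) x = (\<Prod>b\<in>S-{a}. (x - b))" for a x
    unfolding q_def by (simp add: poly_prod)
  have degL: "degree L \<le> card S - 1"
    unfolding L_def
    by (rule degree_sum_le) (use fin degq in \<open>auto intro: order.trans[OF degree_smult_le]\<close>)
  have polyL: "poly L x = poly P x" if x: "x \<in> S" for x
  proof -
    have "poly L x = (\<Sum>a\<in>S. c a * poly (q a) x)"
      unfolding L_def by (simp add: poly_sum)
    also have "\<dots> = c x * poly (q x) x + (\<Sum>a\<in>S-{x}. c a * poly (q a) x)"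
      using fin x by (rule sum.remove)
    also have "(\<Sum>a\<in>S-{x}. c a * poly (q a) x) = 0"
    proof (rule sum.neutral, rule ballI)
        fix i assume i: "i \<in> S - {x}"
        have "(\<Prod>b\<in>S-{i}. (x - b)) = 0"
          using fin i x by (intro prod_zero) auto
        thus "c i * poly (q i) x = 0" by (simp add: polyq)
    qed
    also have "c x * poly (q x) x + 0 = poly P x"
      unfolding c_def polyq using fin by (simp add: prod_zero_iff)
    finally show ?thesis .
  qed
  have "P = L"
    by (rule poly_eqI_degree[of S]) (use polyL deg degL in auto)
  hence "coeff P (card S - 1) = (\<Sum>a\<in>S. c a * coeff (q a) (card S - 1))"
    by (simp add: L_def coeff_sum)
  also have "\<dots> = (\<Sum>a\<in>S. c a)"
    by (intro sum.cong refl) (metis degq lcq mult.right_neutral)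
  finally show ?thesis unfolding c_def .
qed


lemma prod_bound:
  fixes S :: "real set"
  assumes fin: "finite S" and ints: "\<forall>b\<in>S. b \<in> \<int>" and a: "a \<in> S" and b0: "b0 \<in> S" "b0 \<noteq> a"
  shows "\<bar>a - b0\<bar> \<le> \<bar>\<Prod>b\<in>S-{a}. (a - b)\<bar>"
proof -
  have "\<bar>\<Prod>b\<in>S-{a}. (a - b)\<bar> = (\<Prod>b\<in>S-{a}. \<bar>a - b\<bar>)" by (rule abs_prod)
  also have "\<dots> = \<bar>a - b0\<bar> * (\<Prod>b\<in>S-{a}-{b0}. \<bar>a - b\<bar>)"
    using fin b0 by (intro prod.remove) auto
  also have "\<dots> \<ge> \<bar>a - b0\<bar> * 1"
  proof (intro mult_left_mono prod_ge_1)
    fix b assume b: "b \<in> S - {a} - {b0}"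
    have "a - b \<in> \<int>" using ints a b by auto
    moreover have "a - b \<noteq> 0" using b by auto
    ultimately show "1 \<le> \<bar>a - b\<bar>" by (rule Ints_nonzero_abs_ge1)
  qed auto
  finally show ?thesis by simp
qed

lemma strict_mono_x:
  fixes x :: "nat \<Rightarrow> int"
  assumes "\<forall>i<d. x i < x (Suc i)"
  shows "i < j \<Longrightarrow> j \<le> d \<Longrightarrow> x i < x j"
proof (induction j)
  case 0 then show ?case by simp
next
  case (Suc j)
  then show ?case using assms
    by (metis less_Suc_eq less_trans Suc_le_lessD less_imp_le_nat)
qed

theorem mainTheorem7:
  fixes d :: nat and \<alpha> :: nat
  assumes "d > 0" and "\<alpha> > 0"
  shows "\<exists>C::real. \<forall>(P::real poly) (x::nat \<Rightarrow> int).
           degree P = d \<longrightarrow> lead_coeff P = 1 \<longrightarrow>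
           (\<forall>i<d. x i < x (Suc i)) \<longrightarrow>
           (\<forall>i\<le>d. \<bar>poly P (real_of_int (x i))\<bar> \<le> real \<alpha>) \<longrightarrow>
           \<bar>real_of_int (x d - x 0)\<bar> \<le> C"
proof (intro exI[of _ "2 * real \<alpha> * (real d + 1)"] allI impI)
  fix P :: "real poly" and x :: "nat \<Rightarrow> int"
  assume dP: "degree P = d" and lc: "lead_coeff P = 1"
    and mono: "\<forall>i<d. x i < x (Suc i)"
    and bnd: "\<forall>i\<le>d. \<bar>poly P (real_of_int (x i))\<bar> \<le> real \<alpha>"
  define y where "y i = real_of_int (x i)" for i
  define S where "S = y ` {..d}"
  define L where "L = y d - y 0"
  have lt: "i < j \<Longrightarrow> j \<le> d \<Longrightarrow> y i < y j" for i j
    unfolding y_def using strict_mono_x[OF mono] by simp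
  have le: "i \<le> j \<Longrightarrow> j \<le> d \<Longrightarrow> y i \<le> y j" for i j
    using lt[of i j] by (cases "i = j") auto
  have Lpos: "L > 0" unfolding L_def using lt[of 0 d] assms(1) by simp
  have inj: "inj_on y {..d}"
  proof (rule inj_onI)
    fix i j assume "i \<in> {..d}" "j \<in> {..d}" "y i = y j"
    then show "i = j" using lt[of i j] lt[of j i] by (cases i j rule: linorder_cases) auto
  qed
  have cardS: "card S = d + 1" unfolding S_def using card_image[OF inj] by simp
  have finS: "finite S" unfolding S_def by simp
  have intsS: "\<forall>b\<in>S. b \<in> \<int>" unfolding S_def y_def by auto
  have "coeff P (card S - 1) = (\<Sum>a\<in>S. poly P a / (\<Prod>b\<in>S-{a}. (a - b)))"
    by (rule lagrange_coeff[OF finS]) (simp add: cardS dP)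
  hence one: "1 = (\<Sum>i\<le>d. poly P (y i) / (\<Prod>b\<in>S-{y i}. (y i - b)))"
    using lc dP cardS unfolding S_def by (simp add: sum.reindex[OF inj])
  have termb: "\<bar>poly P (y i) / (\<Prod>b\<in>S-{y i}. (y i - b))\<bar> \<le> real \<alpha> / (L / 2)"
    if i: "i \<le> d" for i
  proof -
    have yiS: "y i \<in> S" unfolding S_def using i by simp
    have "\<exists>b0\<in>S. b0 \<noteq> y i \<and> L / 2 \<le> \<bar>y i - b0\<bar>"
    proof (cases "y i - y 0 \<ge> L / 2")
      case True
      then show ?thesis using Lpos by (intro bexI[of _ "y 0"]) (auto simp: S_def)
    next
      case False
      then show ?thesis using Lpos le[of i d] i unfolding L_def
        by (intro bexI[of _ "y d"]) (auto simp: S_def)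
    qed
    then obtain b0 where b0: "b0 \<in> S" "b0 \<noteq> y i" "L / 2 \<le> \<bar>y i - b0\<bar>" by blast
    have pr: "L / 2 \<le> \<bar>\<Prod>b\<in>S-{y i}. (y i - b)\<bar>"
      using b0(3) prod_bound[OF finS intsS yiS b0(1,2)] by linarith
    have "\<bar>poly P (y i)\<bar> \<le> real \<alpha>" using bnd i unfolding y_def by simp
    moreover have "L / 2 > 0" using Lpos by simp
    ultimately have "\<bar>poly P (y i)\<bar> / \<bar>\<Prod>b\<in>S-{y i}. (y i - b)\<bar> \<le> real \<alpha> / (L / 2)"
      using pr by (intro frac_le) auto
    thus ?thesis by (simp add: abs_div)
  qed
  have "1 \<le> (\<Sum>i\<le>d. \<bar>poly P (y i) / (\<Prod>b\<in>S-{y i}. (y i - b))\<bar>)"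
    unfolding one by (rule sum_mono) (simp only: abs_ge_self)
  also have "\<dots> \<le> (\<Sum>i\<le>d. real \<alpha> / (L / 2))"
    by (rule sum_mono) (use termb in auto)
  also have "\<dots> = (real d + 1) * (2 * real \<alpha>) / L" by simp
  finally have "L \<le> 2 * real \<alpha> * (real d + 1)"
    using Lpos by (simp add: field_simps)
  then show "\<bar>real_of_int (x d - x 0)\<bar> \<le> 2 * real \<alpha> * (real d + 1)"
    using Lpos unfolding L_def y_def by simp
qed

end
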